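(* Let $G$ be a finite free graph with $n$ vertices. Then $\phi(G)\ge \frac{n}{\bar{\alpha}(G)}\ge \frac{n}{n-d(G)}$.
   Context: An independent set of $G$ is a free independent set if it is contained in at least two distinct maximal independent sets of $G$. $G$ is free if every vertex lies in some free independent set. The free chromatic number $\phi(G)$ is the minimum positive integer $t$ such that $V(G)$ can be partitioned into $t$ free independent sets. $\bar{\alpha}(G)$ denotes the maximum size of a free independent set of $G$. For an edge $e=uv$, $d(e)=|N(u)\cup N(v)|$ (the number of vertices lying in the neighborhood of $u$ or of $v$), and $d(G)=\min\{d(e): e\in E(G)\}$. *)

theory Defs
  imports Complex_Main
begin

definition simple_graph :: "'a set \<Rightarrow> ('a \<Rightarrow> 'a \<Rightarrow> bool) \<Rightarrow> bool" where
  "simple_graph V E \<longleftrightarrow> finite V \<and> (\<forall>u v. E u v \<longrightarrow> u \<in> V \<and> v \<in> V)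
     \<and> (\<forall>u v. E u v \<longrightarrow> E v u) \<and> (\<forall>u. \<not> E u u)"

definition independent :: "'a set \<Rightarrow> ('a \<Rightarrow> 'a \<Rightarrow> bool) \<Rightarrow> 'a set \<Rightarrow> bool" where
  "independent V E S \<longleftrightarrow> S \<subseteq> V \<and> (\<forall>x\<in>S. \<forall>y\<in>S. \<not> E x y)"

definition maximal_independent :: "'a set \<Rightarrow> ('a \<Rightarrow> 'a \<Rightarrow> bool) \<Rightarrow> 'a set \<Rightarrow> bool" where
  "maximal_independent V E S \<longleftrightarrow> independent V E S \<and>
     (\<forall>T. independent V E T \<and> S \<subseteq> T \<longrightarrow> T = S)"

definition free_independent :: "'a set \<Rightarrow> ('a \<Rightarrow> 'a \<Rightarrow> bool) \<Rightarrow> 'a set \<Rightarrow> bool" where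
  "free_independent V E S \<longleftrightarrow> independent V E S \<and>
     (\<exists>A B. maximal_independent V E A \<and> maximal_independent V E B \<and> A \<noteq> B \<and> S \<subseteq> A \<and> S \<subseteq> B)"

definition free_graph :: "'a set \<Rightarrow> ('a \<Rightarrow> 'a \<Rightarrow> bool) \<Rightarrow> bool" where
  "free_graph V E \<longleftrightarrow> (\<forall>v\<in>V. \<exists>S. free_independent V E S \<and> v \<in> S)"

definition free_partition :: "'a set \<Rightarrow> ('a \<Rightarrow> 'a \<Rightarrow> bool) \<Rightarrow> 'a set set \<Rightarrow> bool" where
  "free_partition V E P \<longleftrightarrow> \<Union>P = V \<and> (\<forall>S\<in>P. S \<noteq> {} \<and> free_independent V E S)
     \<and> (\<forall>S\<in>P. \<forall>T\<in>P. S \<noteq> T \<longrightarrow> S \<inter> T = {})"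

definition free_chromatic_number :: "'a set \<Rightarrow> ('a \<Rightarrow> 'a \<Rightarrow> bool) \<Rightarrow> nat" where
  "free_chromatic_number V E =
     (LEAST t. t > 0 \<and> (\<exists>P. finite P \<and> card P = t \<and> free_partition V E P))"

definition alpha_bar :: "'a set \<Rightarrow> ('a \<Rightarrow> 'a \<Rightarrow> bool) \<Rightarrow> nat" where
  "alpha_bar V E = Max {card S | S. free_independent V E S}"

definition nbhd :: "'a set \<Rightarrow> ('a \<Rightarrow> 'a \<Rightarrow> bool) \<Rightarrow> 'a \<Rightarrow> 'a set" where
  "nbhd V E u = {w \<in> V. E u w}"

definition edge_degree :: "'a set \<Rightarrow> ('a \<Rightarrow> 'a \<Rightarrow> bool) \<Rightarrow> 'a \<Rightarrow> 'a \<Rightarrow> nat" where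
  "edge_degree V E u v = card (nbhd V E u \<union> nbhd V E v)"

definition min_edge_degree :: "'a set \<Rightarrow> ('a \<Rightarrow> 'a \<Rightarrow> bool) \<Rightarrow> nat" where
  "min_edge_degree V E = Min {edge_degree V E u v | u v. u \<in> V \<and> v \<in> V \<and> E u v}"

end

theory Submission
  imports Defs
begin

lemma free_bound:
  assumes sg: "simple_graph V E" and fi: "free_independent V E S"
  shows "card S \<le> card V - min_edge_degree V E \<and> (\<exists>u v. u \<in> V \<and> v \<in> V \<and> E u v)"
proof -
  have fin: "finite V" using sg by (simp add: simple_graph_def)
  obtain A B where A: "maximal_independent V E A" and B: "maximal_independent V E B"
    and AB: "A \<noteq> B" and SA: "S \<subseteq> A" and SB: "S \<subseteq> B"
    using fi unfolding free_independent_def by blast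
  have "\<not> A \<subseteq> B" using A B AB unfolding maximal_independent_def by blast
  then obtain a where aA: "a \<in> A" and aB: "a \<notin> B" by blast
  have aV: "a \<in> V" using A aA unfolding maximal_independent_def independent_def by blast
  have "\<exists>b\<in>B. E a b \<or> E b a"
  proof (rule ccontr)
    assume "\<not> ?thesis"
    hence "independent V E (insert a B)" using B aV sg
      unfolding maximal_independent_def independent_def simple_graph_def by blast
    hence "insert a B = B" using B unfolding maximal_independent_def by blast
    thus False using aB by blast
  qed
  then obtain b where bB: "b \<in> B" and ab: "E a b" using sg unfolding simple_graph_def by blast
  have bV: "b \<in> V" using sg ab unfolding simple_graph_def by blast
  have iA: "\<forall>x\<in>A. \<forall>y\<in>A. \<not> E x y" and iB: "\<forall>x\<in>B. \<forall>y\<in>B. \<not> E x y"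
    using A B unfolding maximal_independent_def independent_def by auto
  have sym: "\<And>x y. E x y \<Longrightarrow> E y x" using sg unfolding simple_graph_def by blast
  have disj: "S \<inter> (nbhd V E a \<union> nbhd V E b) = {}"
  proof (rule ccontr)
    assume "S \<inter> (nbhd V E a \<union> nbhd V E b) \<noteq> {}"
    then obtain x where x: "x \<in> S" "E a x \<or> E b x" unfolding nbhd_def by blast
    show False using x SA SB iA iB aA bB by blast
  qed
  have sub: "S \<union> (nbhd V E a \<union> nbhd V E b) \<subseteq> V"
    using fi unfolding free_independent_def independent_def nbhd_def by blast
  have finS: "finite S" using sub fin finite_subset by blast
  have finN: "finite (nbhd V E a \<union> nbhd V E b)" using sub fin finite_subset by blast
  have "card S + edge_degree V E a b \<le> card V"
    unfolding edge_degree_def using card_Un_disjoint[OF finS finN disj] card_mono[OF fin sub] by simp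
  moreover have "min_edge_degree V E \<le> edge_degree V E a b"
  proof -
    have "finite {edge_degree V E u v | u v. u \<in> V \<and> v \<in> V \<and> E u v}"
    proof -
      have "{edge_degree V E u v | u v. u \<in> V \<and> v \<in> V \<and> E u v} \<subseteq> {..card V}"
      proof
        fix x assume "x \<in> {edge_degree V E u v | u v. u \<in> V \<and> v \<in> V \<and> E u v}"
        then obtain u v where "x = edge_degree V E u v" by blast
        moreover have "nbhd V E u \<union> nbhd V E v \<subseteq> V" unfolding nbhd_def by blast
        ultimately show "x \<in> {..card V}" unfolding edge_degree_def using card_mono[OF fin] by auto
      qed
      thus ?thesis using finite_subset by blast
    qed
    thus ?thesis unfolding min_edge_degree_def using aV bV ab by (intro Min_le) blast+
  qed
  ultimately show ?thesis using aV bV ab by auto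
qed

lemma sing_lemma: assumes "free_graph V E" "v \<in> V" shows "free_independent V E {v}"
proof -
    obtain S where S: "free_independent V E S" "v \<in> S" using assms unfolding free_graph_def by blast
    then obtain A B where "maximal_independent V E A" "maximal_independent V E B" "A \<noteq> B" "S \<subseteq> A" "S \<subseteq> B"
      "independent V E S" unfolding free_independent_def by blast
    moreover have "independent V E {v}" using \<open>independent V E S\<close> \<open>v \<in> S\<close>
      unfolding independent_def by blast
    ultimately show ?thesis unfolding free_independent_def using \<open>v \<in> S\<close>
      by (intro conjI exI[of _ A] exI[of _ B]) auto
qed

theorem mainTheorem3:
  fixes V :: "'a set" and E :: "'a \<Rightarrow> 'a \<Rightarrow> bool" and n :: nat
  assumes "simple_graph V E" and "V \<noteq> {}" and "card V = n" and "free_graph V E"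
  shows "real (free_chromatic_number V E) \<ge> real n / real (alpha_bar V E)
    \<and> real n / real (alpha_bar V E) \<ge> real n / (real n - real (min_edge_degree V E))"
proof -
  have fin: "finite V" using assms(1) by (simp add: simple_graph_def)
  have sing: "free_independent V E {v}" if "v \<in> V" for v
    using sing_lemma[OF assms(4) that] .
  define C where "C = {card S | S. free_independent V E S}"
  have Cfin: "finite C"
  proof -
    have "C \<subseteq> {..card V}"
    proof
      fix x assume "x \<in> C"
      then obtain S where "x = card S" "S \<subseteq> V" unfolding C_def free_independent_def independent_def by blast
      thus "x \<in> {..card V}" using card_mono[OF fin] by simp
    qed
    thus ?thesis using finite_subset by blast
  qed
  obtain v0 where v0: "v0 \<in> V" using assms(2) by blast
  have "1 \<in> C" unfolding C_def using sing[OF v0] by force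
  hence abpos: "alpha_bar V E \<ge> 1" unfolding alpha_bar_def C_def[symmetric] using Cfin Max_ge by blast
  have abmem: "alpha_bar V E \<in> C" unfolding alpha_bar_def C_def[symmetric] using Cfin \<open>1 \<in> C\<close>
    by (intro Max_in) auto
  then obtain S0 where S0: "free_independent V E S0" "alpha_bar V E = card S0" unfolding C_def by blast
  have ab_le: "alpha_bar V E \<le> n - min_edge_degree V E"
    using free_bound[OF assms(1) S0(1)] S0(2) assms(3) by simp
  have le_ab: "card S \<le> alpha_bar V E" if "free_independent V E S" for S
    unfolding alpha_bar_def C_def[symmetric] using Cfin that unfolding C_def by (intro Max_ge) auto
  define P0 where "P0 = (\<lambda>v. {v}) ` V"
  have P0: "free_partition V E P0" unfolding P0_def free_partition_def using sing by auto
  have cP0: "card P0 = n" unfolding P0_def using assms(3) fin by (simp add: card_image)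
  have ex: "n > 0 \<and> (\<exists>P. finite P \<and> card P = n \<and> free_partition V E P)"
  proof -
    have "n > 0" unfolding assms(3)[symmetric] using assms(2) fin by (simp add: card_gt_0_iff)
    moreover have "finite P0" unfolding P0_def using fin by simp
    ultimately show ?thesis using P0 cP0 by (intro conjI exI[of _ P0]) simp_all
  qed
  have "free_chromatic_number V E > 0 \<and> (\<exists>P. finite P \<and> card P = free_chromatic_number V E \<and> free_partition V E P)"
    unfolding free_chromatic_number_def by (rule LeastI_ex) (use ex in blast)
  then obtain P where P: "finite P" "card P = free_chromatic_number V E" "free_partition V E P" by blast
  have "n = card (\<Union>P)" using P(3) assms(3) unfolding free_partition_def by simp
  also have "\<dots> = (\<Sum>S\<in>P. card S)"
  proof (rule card_Union_disjoint)
    show "pairwise disjnt P" using P(3) unfolding free_partition_def pairwise_def disjnt_def by blast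
    show "\<And>A. A \<in> P \<Longrightarrow> finite A" using P(3) fin unfolding free_partition_def
      by (metis Union_upper finite_subset)
  qed
  also have "\<dots> \<le> (\<Sum>S\<in>P. alpha_bar V E)"
    by (rule sum_mono) (use P(3) le_ab in \<open>auto simp: free_partition_def\<close>)
  also have "\<dots> = free_chromatic_number V E * alpha_bar V E" using P(2) by simp
  finally have n_le: "real n \<le> real (free_chromatic_number V E) * real (alpha_bar V E)"
    by (metis of_nat_le_iff of_nat_mult)
  have part1: "real n / real (alpha_bar V E) \<le> real (free_chromatic_number V E)"
    using n_le abpos by (simp add: divide_le_eq)
  have "real (alpha_bar V E) \<le> real n - real (min_edge_degree V E)"
    using ab_le abpos by linarith
  hence part2: "real n / (real n - real (min_edge_degree V E)) \<le> real n / real (alpha_bar V E)"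
    using abpos by (intro divide_left_mono) auto
  show ?thesis using part1 part2 by simp
qed

end
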